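(* Assume the approximating hidden model described in the context, with each $\hat h_k$ $\mathcal Y_k$-measurable, and let $q_k=\bar E[\Lambda_{0,k}X_k\mid\mathcal Y_k]$ (given by $q_0=B(y_0)p_0$, $q_{k+1}=B(y_{k+1})A(\hat h_k)q_k$). Fix $i\ne j$ and let $N^{ji}_k=\sum_{\ell=1}^k\langle X_{\ell-1},e_i\rangle\langle X_\ell,e_j\rangle$ (the number of jumps from $e_i$ to $e_j$ up to time $k$), and $\sigma(N^{ji}_kX_k)=\bar E[\Lambda_{0,k}N^{ji}_kX_k\mid\mathcal Y_k]$. Then $\sigma(N^{ji}_0X_0)=0$ and for all $k\ge0$ $$\sigma(N^{ji}_{k+1}X_{k+1})=B(y_{k+1})A(\hat h_k)\,\sigma(N^{ji}_kX_k)+a_{ji}(\hat h_k)\,\langle q_k,e_i\rangle\,\gamma_j(y_{k+1})\,e_j .$$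
   Context: Notation: $S=\{e_1,\dots,e_N\}$ unit vectors of $\mathbb R^N$; $\pi_i$ probability distributions on $\{1,2,\dots\}$ with $F_i(k)=\sum_{m>k}\pi_i(m)>0$; $p_{ji}\ge0$ ($j\ne i$) with $\sum_{j\ne i}p_{ji}=1$; hazard $\Delta^i(k)=\pi_i(k)/F_i(k-1)$ for $k\ge1$; $A(k)$ is the $N\times N$ matrix with $a_{ii}(k)=1-\Delta^i(k)$ and $a_{ji}(k)=p_{ji}\Delta^i(k)$ for $j\ne i$. Vectors $c,d\in\mathbb R^N$ with $d_i>0$; $\phi$ is the $N(0,1)$ density; $\gamma_j(y)=\dfrac{\phi((y-c_j)/d_j)}{d_j\phi(y)}$ and $B(y)=\mathrm{diag}(\gamma_1(y),\dots,\gamma_N(y))$. $\lambda_k=\gamma_j(y_k)$ on $\{X_k=e_j\}$ and $\Lambda_{0,k}=\prod_{\ell=0}^k\lambda_\ell$. $\mathcal Y_k=\sigma(y_0,\dots,y_k)$, $\mathcal Y_\infty=\sigma(y_0,y_1,\dots)$. Approximating hidden model: under a probability $\bar P$, $y_0,y_1,\dots$ are i.i.d. $N(0,1)$; $\hat h_0,\hat h_1,\dots$ are positive-integer-valued $\mathcal Y_\infty$-measurable random variables; and conditionally on $\mathcal Y_\infty$, $X=(X_k)$ is an $S$-valued Markov chain with $\bar P(X_0=e_i\mid\mathcal Y_\infty)=p_0^i$ (a fixed distribution $p_0$) and $\bar P(X_{k+1}=e_j\mid X_0,\dots,X_k,\mathcal Y_\infty)=a_{ji}(\hat h_k)$ on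 $\{X_k=e_i\}$. *)

theory Defs
  imports "HOL-Probability.Probability"
begin

text \<open>States e_1..e_N are encoded by the elements of a finite type 'i;
  X k w = i means X_k = e_i.\<close>

definition Fsurv :: "('i \<Rightarrow> nat pmf) \<Rightarrow> 'i \<Rightarrow> nat \<Rightarrow> real" where
  "Fsurv \<pi> i k = measure_pmf.prob (\<pi> i) {k<..}"

definition hazard :: "('i \<Rightarrow> nat pmf) \<Rightarrow> 'i \<Rightarrow> nat \<Rightarrow> real" where
  "hazard \<pi> i k = pmf (\<pi> i) k / Fsurv \<pi> i (k - 1)"

text \<open>Amat \<pi> p k j i is the entry a_{ji}(k) of A(k).\<close>
definition Amat :: "('i \<Rightarrow> nat pmf) \<Rightarrow> ('i \<Rightarrow> 'i \<Rightarrow> real) \<Rightarrow> nat \<Rightarrow> 'i \<Rightarrow> 'i \<Rightarrow> real" where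
  "Amat \<pi> p k j i = (if j = i then 1 - hazard \<pi> i k else p j i * hazard \<pi> i k)"

definition gam :: "('i \<Rightarrow> real) \<Rightarrow> ('i \<Rightarrow> real) \<Rightarrow> 'i \<Rightarrow> real \<Rightarrow> real" where
  "gam c d j y = std_normal_density ((y - c j) / d j) / (d j * std_normal_density y)"

definition Lam :: "('i \<Rightarrow> real) \<Rightarrow> ('i \<Rightarrow> real) \<Rightarrow> (nat \<Rightarrow> 'w \<Rightarrow> 'i) \<Rightarrow> (nat \<Rightarrow> 'w \<Rightarrow> real) \<Rightarrow> nat \<Rightarrow> 'w \<Rightarrow> real" where
  "Lam c d X y k w = (\<Prod>l\<le>k. gam c d (X l w) (y l w))"

definition Njump :: "(nat \<Rightarrow> 'w \<Rightarrow> 'i) \<Rightarrow> 'i \<Rightarrow> 'i \<Rightarrow> nat \<Rightarrow> 'w \<Rightarrow> real" where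
  "Njump X i j k w = (\<Sum>l\<in>{1..k}. of_bool (X (l - 1) w = i) * of_bool (X l w = j))"

definition Yalg :: "'w measure \<Rightarrow> (nat \<Rightarrow> 'w \<Rightarrow> real) \<Rightarrow> nat \<Rightarrow> 'w measure" where
  "Yalg M y k = sigma (space M) {y l -` B \<inter> space M | l B. l \<le> k \<and> B \<in> sets borel}"

definition XYalg :: "'w measure \<Rightarrow> (nat \<Rightarrow> 'w \<Rightarrow> 'i) \<Rightarrow> (nat \<Rightarrow> 'w \<Rightarrow> real) \<Rightarrow> nat \<Rightarrow> 'w measure" where
  "XYalg M X y k = sigma (space M)
     ({X l -` B \<inter> space M | l B. l \<le> k} \<union> {y l -` B \<inter> space M | l B. B \<in> sets borel})"

definition Yinf :: "'w measure \<Rightarrow> (nat \<Rightarrow> 'w \<Rightarrow> real) \<Rightarrow> 'w measure" where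
  "Yinf M y = sigma (space M) {y l -` B \<inter> space M | l B. B \<in> sets borel}"

definition qfilt :: "'w measure \<Rightarrow> ('i \<Rightarrow> real) \<Rightarrow> ('i \<Rightarrow> real) \<Rightarrow> (nat \<Rightarrow> 'w \<Rightarrow> 'i) \<Rightarrow> (nat \<Rightarrow> 'w \<Rightarrow> real) \<Rightarrow> nat \<Rightarrow> 'i \<Rightarrow> 'w \<Rightarrow> real" where
  "qfilt M c d X y k m = real_cond_exp M (Yalg M y k) (\<lambda>w. Lam c d X y k w * of_bool (X k w = m))"

definition sigmaNX :: "'w measure \<Rightarrow> ('i \<Rightarrow> real) \<Rightarrow> ('i \<Rightarrow> real) \<Rightarrow> (nat \<Rightarrow> 'w \<Rightarrow> 'i) \<Rightarrow> (nat \<Rightarrow> 'w \<Rightarrow> real) \<Rightarrow> 'i \<Rightarrow> 'i \<Rightarrow> nat \<Rightarrow> 'i \<Rightarrow> 'w \<Rightarrow> real" where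
  "sigmaNX M c d X y i j k m = real_cond_exp M (Yalg M y k)
     (\<lambda>w. Lam c d X y k w * Njump X i j k w * of_bool (X k w = m))"

end

theory Submission
  imports Defs
begin


lemma sigma_gen:
  assumes "G \<subseteq> sets M"
  shows "space (sigma (space M) G) = space M"
    "sets (sigma (space M) G) = sigma_sets (space M) G"
    "subalgebra M (sigma (space M) G)"
proof -
  have P: "G \<subseteq> Pow (space M)" using assms sets.sets_into_space by blast
  show 1: "space (sigma (space M) G) = space M" using P by (simp add: space_measure_of_conv)
  show 2: "sets (sigma (space M) G) = sigma_sets (space M) G" using P by (simp add: sets_measure_of_conv)
  show "subalgebra M (sigma (space M) G)"
    unfolding subalgebra_def using 1 2 assms by (simp add: sets.sigma_sets_subset)
qed

lemma meas_from_sigma: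
  assumes "G \<subseteq> sets M" "\<And>B. B \<in> sets N \<Longrightarrow> f -` B \<inter> space M \<in> G" "f \<in> space M \<rightarrow> space N"
  shows "f \<in> measurable (sigma (space M) G) N"
  using assms sigma_gen[OF assms(1)]
  by (intro measurableI) auto

lemma subalg_sigma:
  assumes "G1 \<subseteq> sets M" "G2 \<subseteq> sets M" "G1 \<subseteq> sigma_sets (space M) G2"
  shows "subalgebra (sigma (space M) G2) (sigma (space M) G1)"
  using sigma_gen[OF assms(1)] sigma_gen[OF assms(2)] assms(3)
  unfolding subalgebra_def by (simp add: sigma_sets_mono)

lemma sfs: "prob_space M \<Longrightarrow> subalgebra M F \<Longrightarrow> sigma_finite_subalgebra M F"
  apply (rule finite_measure_subalgebra_is_sigma_finite)
  apply (simp add: finite_measure_subalgebra_def finite_measure_subalgebra_axioms_def prob_space_def)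
  done

lemma (in prob_space) indep_subalg_integral:
  fixes f g :: "'a \<Rightarrow> real"
  assumes F: "subalgebra M F" and G: "subalgebra M G" and ind: "indep_set (sets F) (sets G)"
    and f: "f \<in> borel_measurable F" and g: "g \<in> borel_measurable G"
    and fi: "integrable M f" and gi: "integrable M g"
  shows "(\<integral>x. f x * g x \<partial>M) = (\<integral>x. f x \<partial>M) * (\<integral>x. g x \<partial>M)"
proof -
  have id: "(\<lambda>x. x) \<in> measurable M H" if H: "subalgebra M H" for H
    using H sets.sets_into_space[of _ H] unfolding subalgebra_def
    by (intro measurableI) (auto simp: Int_absorb2)
  have eq: "sigma_sets (space M) {(\<lambda>x. x) -` A \<inter> space M | A. A \<in> sets H} = sets H"
    if H: "subalgebra M H" for H
  proof -
    have "{(\<lambda>x. x) -` A \<inter> space M | A. A \<in> sets H} = sets H"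
      using H sets.sets_into_space[of _ H] unfolding subalgebra_def
      by (auto simp: Int_absorb2)
    then show ?thesis using H sets.sigma_sets_eq[of H] unfolding subalgebra_def by simp
  qed
  have "indep_var F (\<lambda>x. x) G (\<lambda>x. x)" unfolding indep_var_eq
    using id[OF F] id[OF G] eq[OF F] eq[OF G] ind by simp
  then have "indep_var borel (f \<circ> (\<lambda>x. x)) borel (g \<circ> (\<lambda>x. x))"
    by (rule indep_var_compose) (fact f, fact g)
  then have "indep_var borel f borel g" by (simp add: comp_def)
  from indep_var_lebesgue_integral[OF this fi gi] show ?thesis .
qed

lemma hazard_bounds:
  assumes "pmf (\<pi> l) 0 = 0" "\<And>k. Fsurv \<pi> l k > 0"
  shows "0 \<le> hazard \<pi> l k \<and> hazard \<pi> l k \<le> 1"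
proof -
  have F: "Fsurv \<pi> l (k-1) > 0" using assms(2) .
  have "pmf (\<pi> l) k \<le> Fsurv \<pi> l (k - 1)"
  proof (cases k)
    case 0 then show ?thesis using assms F by (simp add: less_imp_le)
  next
    case (Suc n)
    have "pmf (\<pi> l) k = measure_pmf.prob (\<pi> l) {k}" by (simp add: measure_pmf_single)
    also have "\<dots> \<le> measure_pmf.prob (\<pi> l) {n<..}" using Suc
      by (intro measure_pmf.finite_measure_mono) auto
    finally show ?thesis using Suc by (simp add: Fsurv_def)
  qed
  then show ?thesis using F by (auto simp: hazard_def field_simps)
qed

lemma Amat_bound:
  assumes "\<And>l. pmf (\<pi> l) 0 = 0" "\<And>l k. Fsurv \<pi> l k > 0"
  shows "\<bar>Amat \<pi> p n m l\<bar> \<le> 1 + \<bar>p m l\<bar>"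
proof -
  have hz: "0 \<le> hazard \<pi> l n" "hazard \<pi> l n \<le> 1" using hazard_bounds[of \<pi> l n] assms by auto
  have "\<bar>p m l * hazard \<pi> l n\<bar> \<le> \<bar>p m l\<bar>"
    using hz by (simp add: abs_mult mult_left_le)
  then show ?thesis using hz by (auto simp: Amat_def)
qed

locale hm = prob_space M for M :: "'w measure" +
  fixes \<pi> :: "'i::finite \<Rightarrow> nat pmf" and p :: "'i \<Rightarrow> 'i \<Rightarrow> real" and c d :: "'i \<Rightarrow> real"
    and p0 :: "'i \<Rightarrow> real"
    and y :: "nat \<Rightarrow> 'w \<Rightarrow> real" and h :: "nat \<Rightarrow> 'w \<Rightarrow> nat" and X :: "nat \<Rightarrow> 'w \<Rightarrow> 'i"
  assumes pi_support: "\<And>l. pmf (\<pi> l) 0 = 0"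
    and F_pos: "\<And>l k. Fsurv \<pi> l k > 0"
    and d_pos: "\<And>l. d l > 0"
    and y_meas: "\<And>k. y k \<in> borel_measurable M"
    and y_indep: "indep_vars (\<lambda>_. borel) y UNIV"
    and y_normal: "\<And>k. distributed M lborel (y k) std_normal_density"
    and h_meas: "\<And>k. h k \<in> measurable (Yalg M y k) (count_space UNIV)"
    and X_meas: "\<And>k. X k \<in> measurable M (count_space UNIV)"
    and X_init: "\<And>l. AE w in M. real_cond_exp M (Yinf M y) (\<lambda>w. of_bool (X 0 w = l)) w = p0 l"
    and X_trans: "\<And>k l m. AE w in M. X k w = l \<longrightarrow>
        real_cond_exp M (XYalg M X y k) (\<lambda>w. of_bool (X (Suc k) w = m)) w = Amat \<pi> p (h k w) m l"
begin

lemmas [measurable] = y_meas X_meas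

definition "YG k = {y l -` B \<inter> space M | l B. l \<le> k \<and> B \<in> sets borel}"
definition "YGall = {y l -` B \<inter> space M | l B. B \<in> sets borel}"
definition "XG k = {X l -` B \<inter> space M | l B. l \<le> k}"
definition "Galg k = sigma (space M) (XG k \<union> YG k)"
definition "Ysg n = {y n -` B \<inter> space M | B. B \<in> sets borel}"
definition "Ys n = sigma (space M) (Ysg n)"

lemma Yalg_eq: "Yalg M y k = sigma (space M) (YG k)" unfolding Yalg_def YG_def ..
lemma Yinf_eq: "Yinf M y = sigma (space M) YGall" unfolding Yinf_def YGall_def ..
lemma XY_eq: "XYalg M X y k = sigma (space M) (XG k \<union> YGall)" unfolding XYalg_def XG_def YGall_def ..

lemma gens_sets: "YG k \<subseteq> events" "YGall \<subseteq> events" "XG k \<subseteq> events" "Ysg n \<subseteq> events"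
  unfolding YG_def YGall_def XG_def Ysg_def by auto

lemma subalgs: "subalgebra M (Yalg M y k)" "subalgebra M (Yinf M y)" "subalgebra M (XYalg M X y k)"
  "subalgebra M (Galg k)" "subalgebra M (Ys n)"
  unfolding Yalg_eq Yinf_eq XY_eq Galg_def Ys_def
  by (rule sigma_gen, insert gens_sets, blast)+

lemma spaces[simp]: "space (Yalg M y k) = space M" "space (Yinf M y) = space M" "space (XYalg M X y k) = space M"
  "space (Galg k) = space M" "space (Ys n) = space M"
  using subalgs unfolding subalgebra_def by auto

lemma subalg_Y_mono: "k \<le> k' \<Longrightarrow> subalgebra (Yalg M y k') (Yalg M y k)"
  unfolding Yalg_eq using gens_sets apply (intro subalg_sigma) apply (auto simp: YG_def intro!: sigma_sets.Basic)
  subgoal for l B by (rule exI[of _ l], rule exI[of _ B]) simp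
  done

lemma subalg_Y_Yinf: "subalgebra (Yinf M y) (Yalg M y k)"
  unfolding Yalg_eq Yinf_eq using gens_sets by (intro subalg_sigma) (auto simp: YG_def YGall_def intro!: sigma_sets.Basic)

lemma subalg_Yinf_XY: "subalgebra (XYalg M X y k) (Yinf M y)"
  unfolding XY_eq Yinf_eq using gens_sets by (intro subalg_sigma) (auto simp: YGall_def intro!: sigma_sets.Basic)

lemma subalg_Y_G: "subalgebra (Galg k) (Yalg M y k)"
  unfolding Yalg_eq Galg_def using gens_sets by (intro subalg_sigma) (auto simp: YG_def intro!: sigma_sets.Basic)

lemma subalg_G_XY: "subalgebra (XYalg M X y k) (Galg k)"
  unfolding XY_eq Galg_def using gens_sets by (intro subalg_sigma) (auto simp: YG_def YGall_def XG_def intro!: sigma_sets.Basic)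

lemma subalg_Y_XY: "k' \<le> k \<Longrightarrow> subalgebra (XYalg M X y k) (Yalg M y k')"
  unfolding XY_eq Yalg_eq using gens_sets by (intro subalg_sigma) (auto simp: YG_def YGall_def XG_def intro!: sigma_sets.Basic)

lemma subalg_trans: "subalgebra A B \<Longrightarrow> subalgebra B C \<Longrightarrow> subalgebra A C"
  unfolding subalgebra_def by auto

lemma y_meas_Y: "l \<le> k \<Longrightarrow> y l \<in> borel_measurable (Yalg M y k)"
  unfolding Yalg_eq using gens_sets by (intro meas_from_sigma) (auto simp: YG_def)

lemma y_meas_Yinf: "y l \<in> borel_measurable (Yinf M y)"
  unfolding Yinf_eq using gens_sets by (intro meas_from_sigma) (auto simp: YGall_def)

lemma y_meas_XY: "y l \<in> borel_measurable (XYalg M X y k)"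
  unfolding XY_eq using gens_sets by (intro meas_from_sigma) (auto simp: YGall_def)

lemma y_meas_G: "l \<le> k \<Longrightarrow> y l \<in> borel_measurable (Galg k)"
  unfolding Galg_def using gens_sets by (intro meas_from_sigma) (auto simp: YG_def)

lemma y_meas_Ys: "y n \<in> borel_measurable (Ys n)"
  unfolding Ys_def using gens_sets by (intro meas_from_sigma) (auto simp: Ysg_def)

lemma X_meas_XY: "l \<le> k \<Longrightarrow> X l \<in> measurable (XYalg M X y k) (count_space UNIV)"
  unfolding XY_eq using gens_sets by (intro meas_from_sigma) (auto simp: XG_def)

lemma X_meas_G: "l \<le> k \<Longrightarrow> X l \<in> measurable (Galg k) (count_space UNIV)"
  unfolding Galg_def using gens_sets by (intro meas_from_sigma) (auto simp: XG_def)

lemma h_meas_Y: "l \<le> k \<Longrightarrow> h l \<in> measurable (Yalg M y k) (count_space UNIV)"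
  using measurable_from_subalg[OF subalg_Y_mono h_meas] .


definition "AK = 1 + (\<Sum>m\<in>UNIV. \<Sum>l\<in>UNIV. \<bar>p m l\<bar>)"

lemma AK_nonneg: "0 \<le> AK"
  unfolding AK_def by (simp add: sum_nonneg add_nonneg_nonneg)

lemma Amat_AK: "\<bar>Amat \<pi> p n m l\<bar> \<le> AK"
proof -
  have "\<bar>p m l\<bar> \<le> (\<Sum>l\<in>UNIV. \<bar>p m l\<bar>)" by (rule member_le_sum) auto
  also have "\<dots> \<le> (\<Sum>m\<in>UNIV. \<Sum>l\<in>UNIV. \<bar>p m l\<bar>)"
    by (rule member_le_sum[of m UNIV "\<lambda>m. \<Sum>l\<in>UNIV. \<bar>p m l\<bar>"]) (auto intro: sum_nonneg)
  finally show ?thesis using Amat_bound[of \<pi> p n m l] pi_support F_pos unfolding AK_def by force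
qed

lemma gam_nonneg: "0 \<le> gam c d m t"
  using d_pos[of m] by (simp add: gam_def)

lemma gam_meas[measurable]: "(\<lambda>t. gam c d m t) \<in> borel_measurable borel"
  unfolding gam_def by measurable

lemma gam_density: "std_normal_density t * gam c d m t = normal_density (c m) (d m) t"
proof -
  have p: "std_normal_density t > 0" by (simp add: normal_density_pos)
  have dp: "d m > 0" by (rule d_pos)
  have "std_normal_density t * gam c d m t = std_normal_density ((t - c m) / d m) / d m"
    using p dp by (simp add: gam_def field_simps)
  also have "\<dots> = normal_density (c m) (d m) t"
    using dp by (simp add: normal_density_def real_sqrt_mult power_divide field_simps)
  finally show ?thesis .
qed


lemma gam_nn: "(\<integral>\<^sup>+w. ennreal (gam c d m (y l w)) \<partial>M) = 1"
proof -
  have "(\<integral>\<^sup>+w. ennreal (gam c d m (y l w)) \<partial>M) = (\<integral>\<^sup>+t. ennreal (std_normal_density t) * ennreal (gam c d m t) \<partial>lborel)"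
    by (rule distributed_nn_integral[OF y_normal, symmetric]) measurable
  also have "\<dots> = (\<integral>\<^sup>+t. ennreal (normal_density (c m) (d m) t) \<partial>lborel)"
    by (intro nn_integral_cong) (simp add: gam_density[symmetric] ennreal_mult gam_nonneg)
  also have "\<dots> = ennreal (\<integral>t. normal_density (c m) (d m) t \<partial>lborel)"
    using d_pos[of m] by (intro nn_integral_eq_integral) auto
  also have "\<dots> = 1" using d_pos[of m] by simp
  finally show ?thesis .
qed

lemma gam_integrable: "integrable M (\<lambda>w. gam c d m (y l w))"
  by (rule integrableI_nonneg) (auto simp: gam_nn gam_nonneg)

definition "LB n w = (\<Prod>l\<le>n. \<Sum>m\<in>UNIV. gam c d m (y l w))"

lemma LB_meas[measurable]: "LB n \<in> borel_measurable M"
  unfolding LB_def by measurable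

lemma LB_nonneg: "0 \<le> LB n w"
  by (simp add: LB_def prod_nonneg sum_nonneg gam_nonneg)

lemma LB_integrable: "integrable M (LB n)"
proof (rule integrableI_nonneg)
  show "LB n \<in> borel_measurable M" by measurable
  show "AE x in M. 0 \<le> LB n x" by (simp add: LB_nonneg)
  have ind: "indep_vars (\<lambda>_. borel) (\<lambda>l w. ennreal (\<Sum>m\<in>UNIV. gam c d m (y l w))) {..n}"
    using indep_vars_compose2[OF indep_vars_subset[OF y_indep, of "{..n}"], of "\<lambda>_ t. ennreal (\<Sum>m\<in>UNIV. gam c d m t)" "\<lambda>_. borel"]
    by simp
  have "(\<integral>\<^sup>+w. LB n w \<partial>M) = (\<integral>\<^sup>+w. (\<Prod>l\<le>n. ennreal (\<Sum>m\<in>UNIV. gam c d m (y l w))) \<partial>M)"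
    unfolding LB_def by (intro nn_integral_cong) (simp add: prod_ennreal sum_nonneg gam_nonneg)
  also have "\<dots> = (\<Prod>l\<le>n. \<integral>\<^sup>+w. (\<Sum>m\<in>UNIV. gam c d m (y l w)) \<partial>M)"
    using ind by (intro indep_vars_nn_integral) auto
  also have "\<dots> = (\<Prod>l\<le>n. of_nat CARD('i))"
  proof (rule prod.cong[OF refl])
    fix l
    have "(\<integral>\<^sup>+w. ennreal (\<Sum>m\<in>UNIV. gam c d m (y l w)) \<partial>M) = (\<integral>\<^sup>+w. (\<Sum>m\<in>UNIV. ennreal (gam c d m (y l w))) \<partial>M)"
      by (intro nn_integral_cong) (simp add: sum_ennreal gam_nonneg)
    also have "\<dots> = (\<Sum>m\<in>UNIV. \<integral>\<^sup>+w. ennreal (gam c d m (y l w)) \<partial>M)"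
      by (rule nn_integral_sum) measurable
    also have "\<dots> = of_nat CARD('i)" by (simp add: gam_nn)
    finally show "(\<integral>\<^sup>+w. ennreal (\<Sum>m\<in>UNIV. gam c d m (y l w)) \<partial>M) = of_nat CARD('i)" .
  qed
  also have "\<dots> < \<infinity>" by (simp add: ennreal_of_nat_eq_real_of_nat ennreal_mult_less_top power_less_top_ennreal)
  finally show "(\<integral>\<^sup>+w. LB n w \<partial>M) < \<infinity>" .
qed


lemma ofb_mult: "of_bool P * (a::real) = (if P then a else 0)" by simp

lemma sfsub: "subalgebra M F \<Longrightarrow> sigma_finite_subalgebra M F"
  by (rule sfs[OF prob_space_axioms])

lemma sf_Y: "sigma_finite_subalgebra M (Yalg M y k)" by (rule sfsub[OF subalgs(1)])
lemma sf_YI: "sigma_finite_subalgebra M (Yinf M y)" by (rule sfsub[OF subalgs(2)])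
lemma sf_XY: "sigma_finite_subalgebra M (XYalg M X y k)" by (rule sfsub[OF subalgs(3)])

lemma cnt_comp: "g \<in> measurable N (count_space UNIV) \<Longrightarrow> (\<lambda>w. F (g w) :: real) \<in> borel_measurable N"
  by (rule measurable_compose[of g N "count_space UNIV" F]) auto

lemma ind_meas: "g \<in> measurable N (count_space UNIV) \<Longrightarrow> (\<lambda>w. of_bool (g w = m) :: real) \<in> borel_measurable N"
  by (rule cnt_comp)

lemma gamX_meas: "X l \<in> measurable N (count_space UNIV) \<Longrightarrow> y l' \<in> borel_measurable N \<Longrightarrow>
   (\<lambda>w. gam c d (X l w) (y l' w)) \<in> borel_measurable N"
proof -
  assume a: "X l \<in> measurable N (count_space UNIV)" "y l' \<in> borel_measurable N"
  have "(\<lambda>w. gam c d (X l w) (y l' w)) = (\<lambda>w. \<Sum>m\<in>UNIV. of_bool (X l w = m) * gam c d m (y l' w))"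
    by (simp add: ofb_mult sum.delta')
  also have "\<dots> \<in> borel_measurable N"
    using a by (intro borel_measurable_sum borel_measurable_times ind_meas measurable_compose[OF a(2) gam_meas]) auto
  finally show ?thesis .
qed

lemma Lam_meas_gen: "(\<And>l. l \<le> k \<Longrightarrow> X l \<in> measurable N (count_space UNIV)) \<Longrightarrow>
   (\<And>l. l \<le> k \<Longrightarrow> y l \<in> borel_measurable N) \<Longrightarrow> Lam c d X y k \<in> borel_measurable N"
  unfolding Lam_def[abs_def] by (intro borel_measurable_prod gamX_meas) auto

lemma Lam_meas[measurable]: "Lam c d X y k \<in> borel_measurable M"
  by (rule Lam_meas_gen) auto

lemma Lam_meas_G: "Lam c d X y k \<in> borel_measurable (Galg k)"
  by (rule Lam_meas_gen) (auto intro: X_meas_G y_meas_G)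

lemma Lam_nonneg: "0 \<le> Lam c d X y k w"
  by (simp add: Lam_def prod_nonneg gam_nonneg)

lemma Lam_le_LB: "Lam c d X y k w \<le> LB k w"
  unfolding Lam_def LB_def
  by (intro prod_mono conjI gam_nonneg member_le_sum[of "X _ w" UNIV "\<lambda>m. gam c d m (y _ w)"]) auto

lemma bounded_integrable:
  assumes "f \<in> borel_measurable M" "\<And>w. w \<in> space M \<Longrightarrow> \<bar>f w\<bar> \<le> C * LB n w"
  shows "integrable M f"
proof (rule Bochner_Integration.integrable_bound[OF integrable_mult_right[OF LB_integrable, of C]])
  show "f \<in> borel_measurable M" by fact
  show "AE x in M. norm (f x) \<le> norm (C * LB n x)"
    using assms(2) by (intro AE_I2) (smt (verit) norm_ge_zero real_norm_def)
qed

lemma Lam_gam_le: "Lam c d X y k w * gam c d m (y (Suc k) w) \<le> LB (Suc k) w"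
proof -
  have "gam c d m (y (Suc k) w) \<le> (\<Sum>m\<in>UNIV. gam c d m (y (Suc k) w))"
    by (rule member_le_sum) (auto simp: gam_nonneg)
  then have "Lam c d X y k w * gam c d m (y (Suc k) w) \<le> LB k w * (\<Sum>m\<in>UNIV. gam c d m (y (Suc k) w))"
    by (intro mult_mono Lam_le_LB) (auto simp: gam_nonneg LB_nonneg)
  then show ?thesis by (simp add: LB_def)
qed


definition "evX k x w = (\<Prod>l\<le>k. of_bool (X l w = x l) :: real)"
definition "piX k x w = p0 (x 0) * (\<Prod>l<k. Amat \<pi> p (h l w) (x (Suc l)) (x l))"

lemma evX_eq: "evX k x w = of_bool (\<forall>l\<le>k. X l w = x l)"
  unfolding evX_def by (induction k) (auto simp: le_Suc_eq)

lemma evX_Suc: "evX (Suc k) x w = evX k x w * of_bool (X (Suc k) w = x (Suc k))"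
  unfolding evX_def by simp

lemma evX_meas: "(\<And>l. l \<le> k \<Longrightarrow> X l \<in> measurable N (count_space UNIV)) \<Longrightarrow> evX k x \<in> borel_measurable N"
  unfolding evX_def[abs_def] by (intro borel_measurable_prod ind_meas) auto

lemma evX_meas_M[measurable]: "evX k x \<in> borel_measurable M"
  by (rule evX_meas) auto

lemma bounded_integrable_const:
  fixes f :: "'w \<Rightarrow> real"
  shows "f \<in> borel_measurable M \<Longrightarrow> (\<And>w. w \<in> space M \<Longrightarrow> \<bar>f w\<bar> \<le> B) \<Longrightarrow> integrable M f"
  by (rule integrable_const_bound[where B=B]) auto

lemma evX_int: "integrable M (evX k x)"
  by (rule bounded_integrable_const[where B=1]) (auto simp: evX_eq)

lemma Amat_h_meas: "h l \<in> measurable N (count_space UNIV) \<Longrightarrow> (\<lambda>w. Amat \<pi> p (h l w) m m') \<in> borel_measurable N"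
  by (rule cnt_comp)

lemma piX_meas_Y: "piX k x \<in> borel_measurable (Yalg M y k)"
  unfolding piX_def[abs_def] by (intro borel_measurable_times borel_measurable_const borel_measurable_prod Amat_h_meas h_meas_Y) auto

lemma piX_meas_M[measurable]: "piX k x \<in> borel_measurable M"
  by (rule measurable_from_subalg[OF subalgs(1) piX_meas_Y])

lemma piX_bound: "\<bar>piX k x w\<bar> \<le> \<bar>p0 (x 0)\<bar> * AK ^ k"
proof -
  have "\<bar>\<Prod>l<k. Amat \<pi> p (h l w) (x (Suc l)) (x l)\<bar> \<le> (\<Prod>l<k. AK)"
    unfolding abs_prod by (intro prod_mono) (auto simp: Amat_AK)
  then show ?thesis by (simp add: piX_def abs_mult mult_left_mono)
qed

lemma piX_int: "integrable M (piX k x)"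
  by (rule bounded_integrable_const[OF _ piX_bound]) auto

lemma PI: "AE w in M. real_cond_exp M (Yinf M y) (evX k x) w = piX k x w"
proof (induction k)
  case 0
  have "evX 0 x = (\<lambda>w. of_bool (X 0 w = x 0))" by (simp add: evX_def fun_eq_iff)
  then show ?case using X_init[of "x 0"] by (simp add: piX_def)
next
  case (Suc k)
  define A where "A w = Amat \<pi> p (h k w) (x (Suc k)) (x k)" for w
  define ind where "ind w = (of_bool (X (Suc k) w = x (Suc k)) :: real)" for w
  have [measurable]: "ind \<in> borel_measurable M" unfolding ind_def[abs_def] by (rule ind_meas) simp
  have Ameas: "A \<in> borel_measurable (Yinf M y)"
    unfolding A_def[abs_def] by (intro Amat_h_meas measurable_from_subalg[OF subalg_Y_Yinf h_meas])
  have e: "evX (Suc k) x = (\<lambda>w. evX k x w * ind w)" by (simp add: evX_Suc ind_def fun_eq_iff)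
  have s1: "AE w in M. real_cond_exp M (Yinf M y) (real_cond_exp M (XYalg M X y k) (evX (Suc k) x)) w
      = real_cond_exp M (Yinf M y) (evX (Suc k) x) w"
    by (rule sigma_finite_subalgebra.real_cond_exp_nested_subalg[OF sf_YI subalgs(3) subalg_Yinf_XY evX_int])
  have s2: "AE w in M. real_cond_exp M (XYalg M X y k) (\<lambda>w. evX k x w * ind w) w
     = evX k x w * real_cond_exp M (XYalg M X y k) ind w"
    by (rule sigma_finite_subalgebra.real_cond_exp_mult[OF sf_XY])
      (auto intro!: evX_meas X_meas_XY simp: e[symmetric] evX_int)
  have s3: "AE w in M. X k w = x k \<longrightarrow> real_cond_exp M (XYalg M X y k) ind w = A w"
    using X_trans[of k "x k" "x (Suc k)"] unfolding ind_def[abs_def] A_def .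
  have s23: "AE w in M. real_cond_exp M (XYalg M X y k) (evX (Suc k) x) w = A w * evX k x w"
    using s2 s3 unfolding e by eventually_elim (auto simp: evX_eq)
  have s4: "AE w in M. real_cond_exp M (Yinf M y) (real_cond_exp M (XYalg M X y k) (evX (Suc k) x)) w
      = real_cond_exp M (Yinf M y) (\<lambda>w. A w * evX k x w) w"
    apply (rule sigma_finite_subalgebra.real_cond_exp_cong[OF sf_YI s23])
    apply (rule measurable_from_subalg[OF subalgs(3) borel_measurable_cond_exp])
    using measurable_from_subalg[OF subalgs(2) Ameas] by measurable
  have s5: "AE w in M. real_cond_exp M (Yinf M y) (\<lambda>w. A w * evX k x w) w = A w * real_cond_exp M (Yinf M y) (evX k x) w"
    apply (rule sigma_finite_subalgebra.real_cond_exp_mult[OF sf_YI Ameas])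
     apply simp
    apply (rule bounded_integrable_const[where B=AK])
    using measurable_from_subalg[OF subalgs(2) Ameas] apply measurable
    by (auto simp: A_def abs_mult evX_eq intro: order.trans[OF _ Amat_AK])
  show ?case using s1 s4 s5 Suc
    by eventually_elim (simp add: piX_def A_def)
qed


lemma indep_set_mono': "indep_set A B \<Longrightarrow> A' \<subseteq> A \<Longrightarrow> B' \<subseteq> B \<Longrightarrow> indep_set A' B'"
  unfolding indep_set_def by (rule indep_sets_mono_sets) (auto split: bool.split)

lemma sets_Yalg: "sets (Yalg M y k) = sigma_sets (space M) (YG k)"
  unfolding Yalg_eq by (rule sigma_gen(2)[OF gens_sets(1)])
lemma sets_Ys: "sets (Ys n) = sigma_sets (space M) (Ysg n)"
  unfolding Ys_def by (rule sigma_gen(2)[OF gens_sets(4)])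
lemma sets_Galg: "sets (Galg k) = sigma_sets (space M) (XG k \<union> YG k)"
  unfolding Galg_def by (rule sigma_gen(2)) (use gens_sets in blast)
lemma sets_Yalg_Suc: "sets (Yalg M y (Suc k)) = sigma_sets (space M) (YG (Suc k))"
  by (rule sets_Yalg)

lemma indep_YY: "indep_set (sets (Yalg M y k)) (sets (Ys (Suc k)))"
proof -
  let ?E = "\<lambda>i. {y i -` A \<inter> space M | A. A \<in> sets borel}"
  have ind: "indep_sets ?E UNIV" using y_indep unfolding indep_vars_def2 by simp
  have "indep_sets (\<lambda>b. sigma_sets (space M) (\<Union>i\<in>case_bool {..k} {Suc k} b. ?E i)) UNIV"
  proof (rule indep_sets_collect_sigma)
    show "indep_sets ?E (\<Union>b\<in>UNIV. case_bool {..k} {Suc k} b)" by (rule indep_sets_mono_index[OF _ ind]) auto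
    show "Int_stable (?E i)" for i
    proof (safe intro!: Int_stableI)
      fix A B :: "real set" assume "A \<in> sets borel" "B \<in> sets borel"
      then show "\<exists>C. (y i -` A \<inter> space M) \<inter> (y i -` B \<inter> space M) = (y i -` C \<inter> space M) \<and> C \<in> sets borel"
        by (intro exI[of _ "A \<inter> B"]) auto
    qed
    show "disjoint_family_on (case_bool {..k} {Suc k}) UNIV"
      by (auto simp: disjoint_family_on_def split: bool.split)
  qed
  then have "indep_set (sigma_sets (space M) (\<Union>i\<in>{..k}. ?E i)) (sigma_sets (space M) (\<Union>i\<in>{Suc k}. ?E i))"
    unfolding indep_set_def by (rule indep_sets_mono_sets) (auto split: bool.split)
  moreover have "(\<Union>i\<in>{..k}. ?E i) = YG k" by (auto simp: YG_def)
  moreover have "(\<Union>i\<in>{Suc k}. ?E i) = Ysg (Suc k)" by (auto simp: Ysg_def)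
  ultimately show ?thesis by (simp add: sets_Yalg sets_Ys)
qed

lemma Yinf_ind_int:
  assumes R: "R \<in> borel_measurable (Yinf M y)" "\<And>w. w \<in> space M \<Longrightarrow> \<bar>R w\<bar> \<le> 1"
  shows "(\<integral>w. R w * evX k x w \<partial>M) = (\<integral>w. R w * piX k x w \<partial>M)"
proof -
  have RM[measurable]: "R \<in> borel_measurable M" by (rule measurable_from_subalg[OF subalgs(2) R(1)])
  have int: "integrable M (\<lambda>w. R w * evX k x w)"
    by (rule bounded_integrable_const[where B=1]) (auto simp: evX_eq R(2) abs_mult)
  have "(\<integral>w. R w * evX k x w \<partial>M) = (\<integral>w. R w * real_cond_exp M (Yinf M y) (evX k x) w \<partial>M)"
    by (rule sigma_finite_subalgebra.real_cond_exp_intg(2)[OF sf_YI int R(1), symmetric]) simp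
  also have "\<dots> = (\<integral>w. R w * piX k x w \<partial>M)"
    by (rule Bochner_Integration.integral_cong_AE) (use PI[of k x] in \<open>auto elim!: eventually_mono\<close>)
  finally show ?thesis .
qed


lemma rect_pred[measurable]: "{w\<in>space M. \<forall>l\<le>k. X l w \<in> S l} \<in> events"
proof -
  have "{w\<in>space M. \<forall>l\<le>k. X l w \<in> S l} = space M \<inter> (\<Inter>l\<in>{..k}. X l -` S l \<inter> space M)" by auto
  also have "\<dots> \<in> events" by (intro sets.Int sets.finite_INT ballI measurable_sets[OF X_meas]) auto
  finally show ?thesis .
qed

lemma rect_sum:
  "of_bool (\<forall>l\<le>k. X l w \<in> S l) = (\<Sum>x\<in>PiE {..k} S. evX k x w)"
proof -
  let ?r = "restrict (\<lambda>l. X l w) {..k}"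
  have "(\<Sum>x\<in>PiE {..k} S. evX k x w) = (\<Sum>x\<in>PiE {..k} S. if x = ?r then 1 else 0)"
  proof (rule sum.cong[OF refl])
    fix x assume x: "x \<in> PiE {..k} S"
    have "(\<forall>l\<le>k. X l w = x l) \<longleftrightarrow> x = ?r"
    proof
      assume a: "\<forall>l\<le>k. X l w = x l"
      show "x = ?r"
      proof (rule extensionalityI[of _ "{..k}"])
        show "x \<in> extensional {..k}" using x by (auto simp: PiE_def)
        show "?r \<in> extensional {..k}" by simp
        show "\<And>l. l \<in> {..k} \<Longrightarrow> x l = ?r l" using a by auto
      qed
    qed auto
    then show "evX k x w = (if x = ?r then 1 else 0)" by (simp add: evX_eq)
  qed
  also have "\<dots> = (if ?r \<in> PiE {..k} S then 1 else 0)"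
    by (rule sum.delta) (rule finite_PiE, auto)
  also have "\<dots> = of_bool (\<forall>l\<le>k. X l w \<in> S l)" by (auto simp: PiE_def Pi_def)
  finally show ?thesis ..
qed

lemma ind_C_meas: "C \<in> sets borel \<Longrightarrow> y n \<in> borel_measurable N \<Longrightarrow> (\<lambda>w. indicator C (y n w) :: real) \<in> borel_measurable N"
  by (rule measurable_compose[of "y n" N borel "indicator C"]) auto

lemma rect_prob:
  assumes B: "B \<in> sets (Yalg M y k)" and C: "C \<in> sets borel"
  shows "prob ({w\<in>space M. \<forall>l\<le>k. X l w \<in> S l} \<inter> B \<inter> (y (Suc k) -` C \<inter> space M))
     = (\<Sum>x\<in>PiE {..k} S. \<integral>w. indicator B w * piX k x w \<partial>M) * prob (y (Suc k) -` C \<inter> space M)"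
proof -
  let ?Q = "PiE {..k} S"
  let ?E = "{w\<in>space M. \<forall>l\<le>k. X l w \<in> S l} \<inter> B \<inter> (y (Suc k) -` C \<inter> space M)"
  have fin: "finite ?Q" by (rule finite_PiE) auto
  have BY: "indicator B \<in> borel_measurable (Yalg M y k)" using B by simp
  have BI: "indicator B \<in> borel_measurable (Yinf M y)" by (rule measurable_from_subalg[OF subalg_Y_Yinf BY])
  have [measurable]: "B \<in> events" using B subalgs(1) by (auto simp: subalgebra_def)
  have CI: "(\<lambda>w. indicator C (y (Suc k) w) :: real) \<in> borel_measurable (Yinf M y)"
    by (rule ind_C_meas[OF C y_meas_Yinf])
  have CYs: "(\<lambda>w. indicator C (y (Suc k) w) :: real) \<in> borel_measurable (Ys (Suc k))"
    by (rule ind_C_meas[OF C y_meas_Ys])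
  have [measurable]: "C \<in> sets borel" by fact
  have "prob ?E = (\<integral>w. indicator ?E w \<partial>M)" by simp
  also have "\<dots> = (\<integral>w. (\<Sum>x\<in>?Q. (indicator B w * indicator C (y (Suc k) w)) * evX k x w) \<partial>M)"
  proof (rule Bochner_Integration.integral_cong[OF refl])
    fix w assume "w \<in> space M"
    then show "indicator ?E w = (\<Sum>x\<in>?Q. (indicator B w * indicator C (y (Suc k) w)) * evX k x w)"
      by (auto simp: sum_distrib_left[symmetric] rect_sum[symmetric] indicator_def)
  qed
  also have "\<dots> = (\<Sum>x\<in>?Q. \<integral>w. (indicator B w * indicator C (y (Suc k) w)) * evX k x w \<partial>M)"
    by (rule Bochner_Integration.integral_sum) (rule bounded_integrable_const[where B=1], measurable, auto simp: evX_eq indicator_def)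
  also have "\<dots> = (\<Sum>x\<in>?Q. \<integral>w. (indicator B w * indicator C (y (Suc k) w)) * piX k x w \<partial>M)"
    by (intro sum.cong refl Yinf_ind_int borel_measurable_times BI CI) (auto simp: indicator_def)
  also have "\<dots> = (\<Sum>x\<in>?Q. \<integral>w. (indicator B w * piX k x w) * indicator C (y (Suc k) w) \<partial>M)"
    by (simp add: ac_simps)
  also have "\<dots> = (\<Sum>x\<in>?Q. (\<integral>w. indicator B w * piX k x w \<partial>M) * (\<integral>w. indicator C (y (Suc k) w) \<partial>M))"
  proof (rule sum.cong[OF refl], rule indep_subalg_integral[OF subalgs(1) subalgs(5) indep_YY])
    fix x
    show "(\<lambda>w. indicator B w * piX k x w) \<in> borel_measurable (Yalg M y k)"
      using BY piX_meas_Y by (rule borel_measurable_times)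
    show "(\<lambda>w. indicator C (y (Suc k) w) :: real) \<in> borel_measurable (Ys (Suc k))" by (rule CYs)
    show "integrable M (\<lambda>w. indicator B w * piX k x w)"
      by (rule bounded_integrable_const[where B="\<bar>p0 (x 0)\<bar> * AK ^ k"]) (measurable, auto simp: indicator_def piX_bound AK_nonneg)
    show "integrable M (\<lambda>w. indicator C (y (Suc k) w) :: real)"
      by (rule bounded_integrable_const[where B=1]) (auto intro: ind_C_meas[OF C y_meas] simp: indicator_def)
  qed
  also have "(\<integral>w. indicator C (y (Suc k) w) \<partial>M) = prob (y (Suc k) -` C \<inter> space M)"
  proof -
    have "(\<integral>w. indicator C (y (Suc k) w) \<partial>M) = (\<integral>w. indicator (y (Suc k) -` C \<inter> space M) w \<partial>M :: real)"
      by (rule Bochner_Integration.integral_cong) (auto simp: indicator_def)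
    then show ?thesis by simp
  qed
  finally show ?thesis by (simp add: sum_distrib_right)
qed



end


context hm begin

lemma indep_GY: "indep_set (sets (Galg k)) (sets (Ys (Suc k)))"
proof -
  define G0 where "G0 = {{w\<in>space M. \<forall>l\<le>k. X l w \<in> S l} \<inter> B | S B. B \<in> sets (Yalg M y k)}"
  have YM: "B \<in> events" if "B \<in> sets (Yalg M y k)" for B using that subalgs(1) by (auto simp: subalgebra_def)
  have G0ev: "G0 \<subseteq> events"
  proof
    fix a assume "a \<in> G0"
    then obtain S B where h: "a = {w\<in>space M. \<forall>l\<le>k. X l w \<in> S l} \<inter> B" "B \<in> sets (Yalg M y k)"
      unfolding G0_def mem_Collect_eq by (elim exE conjE)
    show "a \<in> events" unfolding h(1) by (rule sets.Int[OF rect_pred YM[OF h(2)]])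
  qed
  have stab: "Int_stable G0"
  proof (rule Int_stableI)
    fix a b assume "a \<in> G0" "b \<in> G0"
    then obtain S1 B1 S2 B2 where ab: "a = {w\<in>space M. \<forall>l\<le>k. X l w \<in> S1 l} \<inter> B1" "B1 \<in> sets (Yalg M y k)"
      "b = {w\<in>space M. \<forall>l\<le>k. X l w \<in> S2 l} \<inter> B2" "B2 \<in> sets (Yalg M y k)"
      unfolding G0_def mem_Collect_eq by (elim exE conjE)
    have "a \<inter> b = {w\<in>space M. \<forall>l\<le>k. X l w \<in> S1 l \<inter> S2 l} \<inter> (B1 \<inter> B2)" using ab by auto
    moreover have "B1 \<inter> B2 \<in> sets (Yalg M y k)" using ab by auto
    ultimately show "a \<inter> b \<in> G0" unfolding G0_def
      by (intro CollectI exI[of _ "\<lambda>l. S1 l \<inter> S2 l"] exI[of _ "B1 \<inter> B2"] conjI) assumption+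
  qed
  have stab2: "Int_stable (Ysg (Suc k))"
  proof (rule Int_stableI)
    fix a b assume "a \<in> Ysg (Suc k)" "b \<in> Ysg (Suc k)"
    then obtain A B :: "real set" where "A \<in> sets borel" "B \<in> sets borel"
      "a = y (Suc k) -` A \<inter> space M" "b = y (Suc k) -` B \<inter> space M" unfolding Ysg_def mem_Collect_eq by (elim exE conjE)
    then show "a \<inter> b \<in> Ysg (Suc k)" unfolding Ysg_def by (intro CollectI exI[of _ "A \<inter> B"]) auto
  qed
  have "indep_set G0 (Ysg (Suc k))"
  proof (rule indep_setI)
    show "G0 \<subseteq> events" by fact
    show "Ysg (Suc k) \<subseteq> events" by (rule gens_sets)
    fix a b assume "a \<in> G0" "b \<in> Ysg (Suc k)"
    then obtain S B C where a: "a = {w\<in>space M. \<forall>l\<le>k. X l w \<in> S l} \<inter> B" and B: "B \<in> sets (Yalg M y k)"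
      and b: "b = y (Suc k) -` C \<inter> space M" and C: "C \<in> sets borel"
      unfolding G0_def Ysg_def mem_Collect_eq by (elim exE conjE)
    have a': "a = {w\<in>space M. \<forall>l\<le>k. X l w \<in> S l} \<inter> B \<inter> (y (Suc k) -` UNIV \<inter> space M)" unfolding a by blast
    have "prob a = (\<Sum>x\<in>PiE {..k} S. \<integral>w. indicator B w * piX k x w \<partial>M) * prob (y (Suc k) -` UNIV \<inter> space M)"
      unfolding a' by (rule rect_prob[OF B]) simp
    then have pa: "prob a = (\<Sum>x\<in>PiE {..k} S. \<integral>w. indicator B w * piX k x w \<partial>M)"
      by (simp add: prob_space)
    show "prob (a \<inter> b) = prob a * prob b"
      unfolding pa using rect_prob[OF B C, of S] a b by (simp add: Int_assoc)
  qed
  then have "indep_set (sigma_sets (space M) G0) (sigma_sets (space M) (Ysg (Suc k)))"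
    by (rule indep_set_sigma_sets[OF _ stab stab2])
  moreover have "sets (Galg k) \<subseteq> sigma_sets (space M) G0"
    unfolding sets_Galg
  proof (rule sigma_sets_mono, rule subsetI)
    fix E assume "E \<in> XG k \<union> YG k"
    then have "E \<in> G0"
    proof
      assume "E \<in> XG k"
      then obtain l B' where E: "E = X l -` B' \<inter> space M" "l \<le> k" unfolding XG_def mem_Collect_eq by (elim exE conjE)
      have "E = {w\<in>space M. \<forall>l'\<le>k. X l' w \<in> (\<lambda>l'. if l' = l then B' else UNIV) l'} \<inter> space M"
        using E by auto
      moreover have "space M \<in> sets (Yalg M y k)" by (metis sets.top spaces(1))
      ultimately show "E \<in> G0" unfolding G0_def
        by (intro CollectI exI[of _ "\<lambda>l'. if l' = l then B' else UNIV"] exI[of _ "space M"] conjI) assumption+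
    next
      assume "E \<in> YG k"
      then have EY: "E \<in> sets (Yalg M y k)" unfolding sets_Yalg by auto
      have "E \<subseteq> space M" by (rule sets.sets_into_space[OF YM[OF EY]])
      then have "E = {w\<in>space M. \<forall>l'\<le>k. X l' w \<in> (\<lambda>_. UNIV) l'} \<inter> E" by auto
      then show "E \<in> G0" using EY unfolding G0_def
        by (intro CollectI exI[of _ "\<lambda>_. UNIV"] exI[of _ E] conjI) assumption+
    qed
    then show "E \<in> sigma_sets (space M) G0" by auto
  qed
  ultimately show ?thesis by (rule indep_set_mono') (simp add: sets_Ys)
qed



lemma IND:
  assumes Zm: "Z \<in> borel_measurable (Galg k)" and Zi: "integrable M Z"
  shows "AE w in M. real_cond_exp M (Yalg M y (Suc k)) Z w = real_cond_exp M (Yalg M y k) Z w"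
proof -
  let ?g = "real_cond_exp M (Yalg M y k) Z"
  let ?y = "y (Suc k)"
  have ZM[measurable]: "Z \<in> borel_measurable M" by (rule measurable_from_subalg[OF subalgs(4) Zm])
  have gi: "integrable M ?g" by (rule sigma_finite_subalgebra.real_cond_exp_int(1)[OF sf_Y Zi])
  have gY: "?g \<in> borel_measurable (Yalg M y k)" by (rule borel_measurable_cond_exp)
  have gG: "?g \<in> borel_measurable (Galg k)" by (rule measurable_from_subalg[OF subalg_Y_G gY])
  have gM[measurable]: "?g \<in> borel_measurable M" by (rule measurable_from_subalg[OF subalgs(1) gY])
  have YM: "B \<in> events" if "B \<in> sets (Yalg M y k)" for B using that subalgs(1) by (auto simp: subalgebra_def)
  define G' where "G' = {B \<inter> (?y -` C \<inter> space M) | B C. B \<in> sets (Yalg M y k) \<and> C \<in> sets borel}"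
  have G'ev: "G' \<subseteq> events"
  proof
    fix a assume "a \<in> G'"
    then obtain B C where h: "a = B \<inter> (?y -` C \<inter> space M)" "B \<in> sets (Yalg M y k)" "C \<in> sets borel"
      unfolding G'_def mem_Collect_eq by (elim exE conjE)
    have "?y -` C \<inter> space M \<in> events" using h(3) by (rule measurable_sets[OF y_meas])
    then show "a \<in> events" unfolding h(1) by (rule sets.Int[OF YM[OF h(2)]])
  qed
  have SG: "sigma_sets (space M) G' \<subseteq> events" by (rule sets.sigma_sets_subset[OF G'ev])
  have G'P: "G' \<subseteq> Pow (space M)" using G'ev by (auto dest: sets.sets_into_space)
  have stab: "Int_stable G'"
  proof (rule Int_stableI)
    fix a b assume "a \<in> G'" "b \<in> G'"
    then obtain B1 C1 B2 C2 where h: "a = B1 \<inter> (?y -` C1 \<inter> space M)" "B1 \<in> sets (Yalg M y k)" "C1 \<in> sets borel"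
      "b = B2 \<inter> (?y -` C2 \<inter> space M)" "B2 \<in> sets (Yalg M y k)" "C2 \<in> sets borel"
      unfolding G'_def mem_Collect_eq by (elim exE conjE)
    have e: "a \<inter> b = (B1 \<inter> B2) \<inter> (?y -` (C1 \<inter> C2) \<inter> space M)" unfolding h(1,4) by blast
    have "B1 \<inter> B2 \<in> sets (Yalg M y k)" using h by auto
    moreover have "C1 \<inter> C2 \<in> sets borel" using h by auto
    ultimately show "a \<inter> b \<in> G'" unfolding G'_def e
      by (intro CollectI exI[of _ "B1 \<inter> B2"] exI[of _ "C1 \<inter> C2"] conjI refl)
  qed
  have basic': "(\<integral>x\<in>A. Z x \<partial>M) = (\<integral>x\<in>A. ?g x \<partial>M)" if AG: "A \<in> G'" for A
  proof -
    obtain B C where h: "A = B \<inter> (?y -` C \<inter> space M)" and B: "B \<in> sets (Yalg M y k)" and C: "C \<in> sets borel"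
      using AG unfolding G'_def mem_Collect_eq by (elim exE conjE)
    have BM[measurable]: "B \<in> events" by (rule YM[OF B])
    have BG: "(indicator B :: 'w \<Rightarrow> real) \<in> borel_measurable (Galg k)"
      by (rule measurable_from_subalg[OF subalg_Y_G borel_measurable_indicator[OF B]])
    have CYs: "(\<lambda>w. indicator C (?y w) :: real) \<in> borel_measurable (Ys (Suc k))"
      by (rule ind_C_meas[OF C y_meas_Ys])
    have Ci: "integrable M (\<lambda>w. indicator C (?y w) :: real)"
      by (rule bounded_integrable_const[where B=1], rule ind_C_meas[OF C y_meas]) (simp add: indicator_def)
    have eq: "(\<integral>x\<in>A. f x \<partial>M) = (\<integral>x. (indicator B x * f x) * indicator C (?y x) \<partial>M)" for f :: "'w \<Rightarrow> real"
      unfolding set_lebesgue_integral_def h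
      by (rule Bochner_Integration.integral_cong) (auto simp: indicator_def)
    have "(\<integral>x\<in>A. Z x \<partial>M) = (\<integral>x. indicator B x * Z x \<partial>M) * (\<integral>x. indicator C (?y x) \<partial>M)"
      unfolding eq
      by (rule indep_subalg_integral[OF subalgs(4) subalgs(5) indep_GY borel_measurable_times[OF BG Zm] CYs
          integrable_mult_indicator[OF BM Zi, simplified] Ci])
    also have "(\<integral>x. indicator B x * Z x \<partial>M) = (\<integral>x. indicator B x * ?g x \<partial>M)"
      using sigma_finite_subalgebra.real_cond_exp_intA[OF sf_Y Zi B] unfolding set_lebesgue_integral_def by simp
    also have "(\<integral>x. indicator B x * ?g x \<partial>M) * (\<integral>x. indicator C (?y x) \<partial>M) = (\<integral>x\<in>A. ?g x \<partial>M)"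
      unfolding eq
      by (rule indep_subalg_integral[OF subalgs(4) subalgs(5) indep_GY borel_measurable_times[OF BG gG] CYs
          integrable_mult_indicator[OF BM gi, simplified] Ci, symmetric])
    finally show ?thesis .
  qed
  have sub: "sets (Yalg M y (Suc k)) \<subseteq> sigma_sets (space M) G'"
    unfolding sets_Yalg
  proof (rule sigma_sets_mono, rule subsetI)
    fix E assume "E \<in> YG (Suc k)"
    then obtain l B where E: "E = y l -` B \<inter> space M" "l \<le> Suc k" "B \<in> sets borel"
      unfolding YG_def mem_Collect_eq by (elim exE conjE)
    have "E \<in> G'"
    proof (cases "l = Suc k")
      case True
      have "E = space M \<inter> (?y -` B \<inter> space M)" unfolding E True by blast
      moreover have "space M \<in> sets (Yalg M y k)" by (metis sets.top spaces(1))
      ultimately show ?thesis unfolding G'_def using E(3)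
        by (intro CollectI exI[of _ "space M"] exI[of _ B] conjI) assumption+
    next
      case False
      then have "l \<le> k" using E(2) by simp
      then have EY: "E \<in> sets (Yalg M y k)" unfolding sets_Yalg E(1) YG_def using E(3) by blast
      have "E = E \<inter> (?y -` UNIV \<inter> space M)" unfolding E by blast
      then show ?thesis unfolding G'_def using EY
        by (intro CollectI exI[of _ E] exI[of _ UNIV] conjI) auto
    qed
    then show "E \<in> sigma_sets (space M) G'" by auto
  qed
  have P: "(\<integral>x\<in>A. Z x \<partial>M) = (\<integral>x\<in>A. ?g x \<partial>M)" if A: "A \<in> sigma_sets (space M) G'" for A
    using stab G'P A
  proof (induction rule: sigma_sets_induct_disjoint)
    case (basic A) then show ?case by (rule basic')
  next
    case empty then show ?case by (simp add: set_lebesgue_integral_def)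
  next
    case (compl A)
    have AM: "A \<in> events" using compl(1) SG by blast
    have e: "(\<integral>x\<in>space M - A. f x \<partial>M) = (\<integral>x. f x \<partial>M) - (\<integral>x\<in>A. f x \<partial>M)" if fi: "integrable M f" for f :: "'w \<Rightarrow> real"
    proof -
      have "(\<integral>x\<in>space M - A. f x \<partial>M) = (\<integral>x. f x - indicator A x * f x \<partial>M)"
        unfolding set_lebesgue_integral_def
        by (rule Bochner_Integration.integral_cong) (auto simp: indicator_def)
      also have "\<dots> = (\<integral>x. f x \<partial>M) - (\<integral>x. indicator A x * f x \<partial>M)"
        by (rule Bochner_Integration.integral_diff[OF fi integrable_mult_indicator[OF AM fi, simplified]])
      finally show ?thesis unfolding set_lebesgue_integral_def by simp
    qed
    show ?case unfolding e[OF Zi] e[OF gi] compl(2)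
      using sigma_finite_subalgebra.real_cond_exp_int(2)[OF sf_Y Zi] by simp
  next
    case (union A)
    have AM: "A i \<in> events" for i using union(2) SG by blast
    have si: "set_integrable M (\<Union>i. A i) f" if "integrable M f" for f :: "'w \<Rightarrow> real"
      unfolding set_integrable_def using AM that by (intro integrable_mult_indicator) auto
    have "(\<integral>x\<in>(\<Union>i. A i). Z x \<partial>M) = (\<Sum>i. (\<integral>x\<in>A i. Z x \<partial>M))"
      by (rule lebesgue_integral_countable_add[OF AM _ si[OF Zi]]) (use union(1) in \<open>auto simp: disjoint_family_on_def\<close>)
    also have "\<dots> = (\<Sum>i. (\<integral>x\<in>A i. ?g x \<partial>M))" using union(3) by simp
    also have "\<dots> = (\<integral>x\<in>(\<Union>i. A i). ?g x \<partial>M)"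
      by (rule lebesgue_integral_countable_add[OF AM _ si[OF gi], symmetric]) (use union(1) in \<open>auto simp: disjoint_family_on_def\<close>)
    finally show ?case .
  qed
  show ?thesis
  proof (rule sigma_finite_subalgebra.real_cond_exp_charact[OF sf_Y])
    show "\<And>A. A \<in> sets (Yalg M y (Suc k)) \<Longrightarrow> (\<integral>x\<in>A. Z x \<partial>M) = (\<integral>x\<in>A. ?g x \<partial>M)"
      using P sub by blast
    show "integrable M Z" by fact
    show "integrable M ?g" by fact
    show "?g \<in> borel_measurable (Yalg M y (Suc k))"
      by (rule measurable_from_subalg[OF subalg_Y_mono gY]) simp
  qed
qed



lemma subalg_Y_XY': "subalgebra (XYalg M X y k) (Yalg M y k')"
  unfolding XY_eq Yalg_eq using gens_sets by (intro subalg_sigma) (auto simp: YG_def YGall_def XG_def intro!: sigma_sets.Basic)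

lemma sf_Y': "sigma_finite_subalgebra M (Yalg M y k)" by (rule sf_Y)

lemma Nj_bound: "0 \<le> Njump X i j k w \<and> Njump X i j k w \<le> real k"
proof
  show "0 \<le> Njump X i j k w" unfolding Njump_def by (rule sum_nonneg) auto
  have "Njump X i j k w \<le> of_nat (card {1..k}) * 1"
    unfolding Njump_def by (rule sum_bounded_above) auto
  then show "Njump X i j k w \<le> real k" by simp
qed

lemma Nj_meas: "(\<And>l. l \<le> k \<Longrightarrow> X l \<in> measurable N (count_space UNIV)) \<Longrightarrow> Njump X i j k \<in> borel_measurable N"
  unfolding Njump_def[abs_def]
  by (intro borel_measurable_sum borel_measurable_times ind_meas) auto

lemma Nj_Suc: "Njump X i j (Suc k) w = Njump X i j k w + of_bool (X k w = i) * of_bool (X (Suc k) w = j)"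
  unfolding Njump_def by (simp add: sum.cl_ivl_Suc)

lemma Lam_Suc: "Lam c d X y (Suc k) w = Lam c d X y k w * gam c d (X (Suc k) w) (y (Suc k) w)"
  unfolding Lam_def by simp


lemma sum_ofb: fixes g :: "'a::finite \<Rightarrow> real" shows "(\<Sum>l\<in>UNIV. of_bool (l = i) * g l) = g i"
  by (simp add: ofb_mult sum.delta)

lemma main_step:
  fixes k :: nat and m :: 'i
  shows "AE w in M. sigmaNX M c d X y i j (Suc k) m w =
           gam c d m (y (Suc k) w) * (\<Sum>l\<in>UNIV. Amat \<pi> p (h k w) m l * sigmaNX M c d X y i j k l w)
           + of_bool (m = j) * Amat \<pi> p (h k w) j i * qfilt M c d X y k i w * gam c d j (y (Suc k) w)"
proof -
  define Y1 where "Y1 = Yalg M y (Suc k)"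
  define Yk where "Yk = Yalg M y k"
  define XY where "XY = XYalg M X y k"
  define L where "L = Lam c d X y k"
  define N where "N = Njump X i j k"
  define ind where "ind n l w = (of_bool (X n w = l) :: real)" for n l w
  define gy where "gy w = gam c d m (y (Suc k) w)" for w
  define A where "A l w = Amat \<pi> p (h k w) m l" for l w
  define W where "W w = L w * (N w + of_bool (m = j) * ind k i w)" for w
  define f where "f w = Lam c d X y (Suc k) w * Njump X i j (Suc k) w * of_bool (X (Suc k) w = m)" for w
  define F where "F l w = (gy w * A l w) * (W w * ind k l w)" for l w
  have sfY1: "sigma_finite_subalgebra M Y1" unfolding Y1_def by (rule sf_Y)
  have sfYk: "sigma_finite_subalgebra M Yk" unfolding Yk_def by (rule sf_Y)
  have sfXY: "sigma_finite_subalgebra M XY" unfolding XY_def by (rule sf_XY)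
  have ind_G: "ind n l \<in> borel_measurable (Galg k)" if "n \<le> k" for n l
    unfolding ind_def[abs_def] using that by (intro ind_meas X_meas_G)
  have ind_M[measurable]: "ind n l \<in> borel_measurable M" for n l
    unfolding ind_def[abs_def] by (intro ind_meas) simp
  have L_G: "L \<in> borel_measurable (Galg k)" unfolding L_def by (rule Lam_meas_G)
  have N_G: "N \<in> borel_measurable (Galg k)" unfolding N_def by (rule Nj_meas) (auto intro: X_meas_G)
  have W_G: "W \<in> borel_measurable (Galg k)" unfolding W_def[abs_def]
    using L_G N_G ind_G by (intro borel_measurable_times borel_measurable_add borel_measurable_const) auto
  have W_XY: "W \<in> borel_measurable XY" unfolding XY_def by (rule measurable_from_subalg[OF subalg_G_XY W_G])
  have W_M[measurable]: "W \<in> borel_measurable M" by (rule measurable_from_subalg[OF subalgs(4) W_G])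
  have gy_XY: "gy \<in> borel_measurable XY" unfolding gy_def[abs_def] XY_def
    by (rule measurable_compose[OF y_meas_XY gam_meas])
  have gy_Y1: "gy \<in> borel_measurable Y1" unfolding gy_def[abs_def] Y1_def
    by (rule measurable_compose[OF y_meas_Y gam_meas]) simp
  have gy_M[measurable]: "gy \<in> borel_measurable M" unfolding gy_def[abs_def] by measurable
  have A_Y1: "A l \<in> borel_measurable Y1" for l unfolding A_def[abs_def] Y1_def
    by (intro Amat_h_meas h_meas_Y) simp
  have A_M[measurable]: "A l \<in> borel_measurable M" for l
    by (rule measurable_from_subalg[OF _ A_Y1]) (simp add: Y1_def subalgs)
  have L_M[measurable]: "L \<in> borel_measurable M" unfolding L_def by measurable
  have N_M[measurable]: "N \<in> borel_measurable M" unfolding N_def by (rule Nj_meas) simp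
  have Lnn: "0 \<le> L w" for w unfolding L_def by (rule Lam_nonneg)
  have Nb: "0 \<le> N w" "N w \<le> real k" for w unfolding N_def using Nj_bound by auto
  have indb: "0 \<le> ind n l w" "ind n l w \<le> 1" for n l w unfolding ind_def by auto
  have gnn: "0 \<le> gy w" for w unfolding gy_def by (rule gam_nonneg)
  have Ab: "\<bar>A l w\<bar> \<le> AK" for l w unfolding A_def by (rule Amat_AK)
  have Wb: "0 \<le> W w \<and> W w \<le> L w * (real k + 1)" for w
  proof -
    have "0 \<le> N w + of_bool (m = j) * ind k i w" "N w + of_bool (m = j) * ind k i w \<le> real k + 1"
      using Nb[of w] indb[of k i w] by auto
    then show ?thesis unfolding W_def using Lnn[of w] by (auto intro: mult_left_mono)
  qed
  have Wi: "\<bar>W w * ind k l w\<bar> \<le> (real k + 1) * LB k w" for w l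
  proof -
    have "\<bar>W w * ind k l w\<bar> \<le> W w" using Wb[of w] indb[of k l w] by (simp add: abs_mult mult_left_le)
    also have "\<dots> \<le> L w * (real k + 1)" using Wb by blast
    also have "\<dots> \<le> LB k w * (real k + 1)" unfolding L_def by (intro mult_right_mono Lam_le_LB) auto
    finally show ?thesis by (simp add: mult.commute)
  qed
  have Fb: "\<bar>F l w\<bar> \<le> (AK * (real k + 1)) * LB (Suc k) w" for l w
  proof -
    have "\<bar>F l w\<bar> = gy w * \<bar>A l w\<bar> * \<bar>W w * ind k l w\<bar>" unfolding F_def using gnn[of w] by (simp add: abs_mult)
    also have "\<dots> \<le> gy w * AK * (L w * (real k + 1))"
    proof (intro mult_mono mult_left_mono)
      show "\<bar>W w * ind k l w\<bar> \<le> L w * (real k + 1)"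
        using Wb[of w] indb[of k l w] by (smt (verit) abs_mult abs_of_nonneg mult_left_le mult_nonneg_nonneg)
    qed (use gnn Ab AK_nonneg in auto)
    also have "\<dots> = (AK * (real k + 1)) * (L w * gy w)" by (simp add: ac_simps)
    also have "\<dots> \<le> (AK * (real k + 1)) * LB (Suc k) w"
      unfolding L_def gy_def using AK_nonneg by (intro mult_left_mono Lam_gam_le) auto
    finally show ?thesis .
  qed
  have F_M[measurable]: "F l \<in> borel_measurable M" for l unfolding F_def[abs_def] by measurable
  have F_int: "integrable M (F l)" for l by (rule bounded_integrable[OF F_M Fb])
  have WI_int: "integrable M (\<lambda>w. W w * ind k l w)" for l by (rule bounded_integrable[OF _ Wi]) measurable
  have f_eq: "f w = (gy w * W w) * ind (Suc k) m w" for w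
    by (cases "X (Suc k) w = m")
       (auto simp: f_def gy_def W_def ind_def L_def N_def Lam_Suc Nj_Suc algebra_simps)
  have f_M[measurable]: "f \<in> borel_measurable M" unfolding f_eq[abs_def] by measurable
  have f_int: "integrable M f"
  proof (rule bounded_integrable[OF f_M, of "real k + 1" "Suc k"])
    fix w assume "w \<in> space M"
    have "\<bar>f w\<bar> = Lam c d X y (Suc k) w * (Njump X i j (Suc k) w * of_bool (X (Suc k) w = m))"
      unfolding f_def using Lam_nonneg Nj_bound by (simp add: abs_mult)
    also have "\<dots> \<le> LB (Suc k) w * (real k + 1)"
    proof (intro mult_mono Lam_le_LB)
      show "Njump X i j (Suc k) w * of_bool (X (Suc k) w = m) \<le> real k + 1"
        using Nj_bound[of i j "Suc k" w] by auto
    qed (use LB_nonneg Nj_bound in auto)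
    finally show "\<bar>f w\<bar> \<le> (real k + 1) * LB (Suc k) w" by (simp add: mult.commute)
  qed
  have Sa: "AE w in M. real_cond_exp M Y1 (real_cond_exp M XY f) w = real_cond_exp M Y1 f w"
    by (rule sigma_finite_subalgebra.real_cond_exp_nested_subalg[OF sfY1 _ _ f_int])
       (simp_all add: XY_def Y1_def subalgs subalg_Y_XY')
  have Sb: "AE w in M. real_cond_exp M XY f w = (gy w * W w) * real_cond_exp M XY (ind (Suc k) m) w"
  proof -
    have "AE w in M. real_cond_exp M XY (\<lambda>w. (gy w * W w) * ind (Suc k) m w) w = (gy w * W w) * real_cond_exp M XY (ind (Suc k) m) w"
      by (rule sigma_finite_subalgebra.real_cond_exp_mult[OF sfXY])
        (auto intro: borel_measurable_times gy_XY W_XY simp: f_eq[symmetric] f_int)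
    moreover have "f = (\<lambda>w. (gy w * W w) * ind (Suc k) m w)" using f_eq by auto
    ultimately show ?thesis by simp
  qed
  have Sc: "AE w in M. real_cond_exp M XY (ind (Suc k) m) w = (\<Sum>l\<in>UNIV. ind k l w * A l w)"
  proof -
    have "AE w in M. \<forall>l\<in>UNIV. X k w = l \<longrightarrow> real_cond_exp M XY (ind (Suc k) m) w = A l w"
      unfolding AE_finite_all[OF finite_class.finite_UNIV]
      using X_trans[of k _ m] unfolding XY_def ind_def[abs_def] A_def by auto
    then show ?thesis
    proof eventually_elim
      case (elim w)
      have "(\<Sum>l\<in>UNIV. ind k l w * A l w) = (\<Sum>l\<in>UNIV. if X k w = l then A l w else 0)"
        by (intro sum.cong) (auto simp: ind_def)
      also have "\<dots> = A (X k w) w" by (simp add: sum.delta)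
      finally show ?case using elim by simp
    qed
  qed
  have Sbc: "AE w in M. real_cond_exp M XY f w = (\<Sum>l\<in>UNIV. F l w)"
    using Sb Sc
  proof eventually_elim
    case (elim w)
    then show ?case by (simp add: F_def sum_distrib_left ac_simps)
  qed
  have Sd: "AE w in M. real_cond_exp M Y1 (real_cond_exp M XY f) w = real_cond_exp M Y1 (\<lambda>w. \<Sum>l\<in>UNIV. F l w) w"
    by (rule sigma_finite_subalgebra.real_cond_exp_cong[OF sfY1 Sbc])
       (auto intro: measurable_from_subalg[OF _ borel_measurable_cond_exp] simp: XY_def subalgs)
  have Se: "AE w in M. real_cond_exp M Y1 (\<lambda>w. \<Sum>l\<in>UNIV. F l w) w = (\<Sum>l\<in>UNIV. real_cond_exp M Y1 (F l) w)"
    by (rule sigma_finite_subalgebra.real_cond_exp_sum[OF sfY1 F_int])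
  have Sf: "AE w in M. \<forall>l\<in>UNIV. real_cond_exp M Y1 (F l) w = (gy w * A l w) * real_cond_exp M Y1 (\<lambda>w. W w * ind k l w) w"
    unfolding AE_finite_all[OF finite_class.finite_UNIV]
  proof
    fix l
    show "AE w in M. real_cond_exp M Y1 (F l) w = (gy w * A l w) * real_cond_exp M Y1 (\<lambda>w. W w * ind k l w) w"
      unfolding F_def[abs_def]
      by (rule sigma_finite_subalgebra.real_cond_exp_mult[OF sfY1])
         (auto intro: borel_measurable_times gy_Y1 A_Y1 F_int[unfolded F_def[abs_def]])
  qed
  have Sg: "AE w in M. \<forall>l\<in>UNIV. real_cond_exp M Y1 (\<lambda>w. W w * ind k l w) w = real_cond_exp M Yk (\<lambda>w. W w * ind k l w) w"
    unfolding AE_finite_all[OF finite_class.finite_UNIV]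
  proof
    fix l
    show "AE w in M. real_cond_exp M Y1 (\<lambda>w. W w * ind k l w) w = real_cond_exp M Yk (\<lambda>w. W w * ind k l w) w"
      unfolding Y1_def Yk_def
      by (rule IND[OF _ WI_int]) (intro borel_measurable_times W_G ind_G, simp)
  qed
  have Sh: "AE w in M. \<forall>l\<in>UNIV. real_cond_exp M Yk (\<lambda>w. W w * ind k l w) w =
      sigmaNX M c d X y i j k l w + of_bool (m = j) * of_bool (l = i) * qfilt M c d X y k i w"
    unfolding AE_finite_all[OF finite_class.finite_UNIV]
  proof
    fix l
    have e: "(\<lambda>w. W w * ind k l w) = (\<lambda>w. L w * N w * ind k l w + (of_bool (m = j) * of_bool (l = i)) * (L w * ind k i w))"
      by (auto simp: W_def ind_def algebra_simps fun_eq_iff)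
    have i1: "integrable M (\<lambda>w. L w * N w * ind k l w)"
    proof (rule bounded_integrable[of _ "real k" k])
      fix w assume "w \<in> space M"
      have "\<bar>L w * N w * ind k l w\<bar> \<le> L w * real k" using Lnn[of w] Nb[of w] indb[of k l w]
        by (simp add: abs_mult) (smt (verit) mult_left_le mult_left_mono mult_nonneg_nonneg)
      also have "\<dots> \<le> LB k w * real k" unfolding L_def by (intro mult_right_mono Lam_le_LB) auto
      finally show "\<bar>L w * N w * ind k l w\<bar> \<le> real k * LB k w" by (simp add: mult.commute)
    qed measurable
    have i2: "integrable M (\<lambda>w. L w * ind k i w)"
    proof (rule bounded_integrable[of _ 1 k])
      fix w assume "w \<in> space M"
      have "\<bar>L w * ind k i w\<bar> \<le> L w" using Lnn[of w] indb[of k i w] by (simp add: abs_mult mult_left_le)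
      also have "\<dots> \<le> LB k w" unfolding L_def by (rule Lam_le_LB)
      finally show "\<bar>L w * ind k i w\<bar> \<le> 1 * LB k w" by simp
    qed measurable
    have "AE w in M. real_cond_exp M Yk (\<lambda>w. L w * N w * ind k l w + (of_bool (m = j) * of_bool (l = i)) * (L w * ind k i w)) w
       = real_cond_exp M Yk (\<lambda>w. L w * N w * ind k l w) w + real_cond_exp M Yk (\<lambda>w. (of_bool (m = j) * of_bool (l = i)) * (L w * ind k i w)) w"
      by (rule sigma_finite_subalgebra.real_cond_exp_add[OF sfYk i1]) (rule integrable_mult_right[OF i2])
    moreover have "AE w in M. real_cond_exp M Yk (\<lambda>w. (of_bool (m = j) * of_bool (l = i)) * (L w * ind k i w)) w
       = (of_bool (m = j) * of_bool (l = i)) * real_cond_exp M Yk (\<lambda>w. L w * ind k i w) w"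
      by (rule sigma_finite_subalgebra.real_cond_exp_cmult[OF sfYk i2])
    ultimately show "AE w in M. real_cond_exp M Yk (\<lambda>w. W w * ind k l w) w =
      sigmaNX M c d X y i j k l w + of_bool (m = j) * of_bool (l = i) * qfilt M c d X y k i w"
      unfolding e by eventually_elim (simp add: sigmaNX_def qfilt_def Yk_def L_def N_def ind_def)
  qed
  have "AE w in M. real_cond_exp M Y1 f w =
      gy w * (\<Sum>l\<in>UNIV. A l w * sigmaNX M c d X y i j k l w)
      + of_bool (m = j) * A i w * qfilt M c d X y k i w * gy w"
    using Sa Sd Se Sf Sg Sh
  proof eventually_elim
    case (elim w)
    have "real_cond_exp M Y1 f w = (\<Sum>l\<in>UNIV. (gy w * A l w) * (sigmaNX M c d X y i j k l w + of_bool (m = j) * of_bool (l = i) * qfilt M c d X y k i w))"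
      using elim by simp
    also have "\<dots> = (\<Sum>l\<in>UNIV. (gy w * A l w) * sigmaNX M c d X y i j k l w
        + of_bool (l = i) * (gy w * A l w * of_bool (m = j) * qfilt M c d X y k i w))"
      by (rule sum.cong[OF refl]) algebra
    also have "\<dots> = (\<Sum>l\<in>UNIV. (gy w * A l w) * sigmaNX M c d X y i j k l w)
        + (\<Sum>l\<in>UNIV. of_bool (l = i) * (gy w * A l w * of_bool (m = j) * qfilt M c d X y k i w))"
      by (rule sum.distrib)
    also have "\<dots> = (\<Sum>l\<in>UNIV. (gy w * A l w) * sigmaNX M c d X y i j k l w)
        + gy w * A i w * of_bool (m = j) * qfilt M c d X y k i w"
      by (simp only: sum_ofb)
    also have "\<dots> = gy w * (\<Sum>l\<in>UNIV. A l w * sigmaNX M c d X y i j k l w)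
      + of_bool (m = j) * A i w * qfilt M c d X y k i w * gy w"
      by (simp only: sum_distrib_left mult.assoc mult.commute mult.left_commute)
    finally show ?case .
  qed
  moreover have fe: "sigmaNX M c d X y i j (Suc k) m = real_cond_exp M Y1 f"
    unfolding sigmaNX_def Y1_def f_def[abs_def] ..
  ultimately show ?thesis
    by (cases "m = j") (simp_all add: gy_def A_def)
qed


end

theorem lemma6p1:
  fixes M :: "'w measure"
    and \<pi> :: "'i::finite \<Rightarrow> nat pmf"
    and p :: "'i \<Rightarrow> 'i \<Rightarrow> real"
    and c d :: "'i \<Rightarrow> real"
    and p0 :: "'i \<Rightarrow> real"
    and y :: "nat \<Rightarrow> 'w \<Rightarrow> real"
    and h :: "nat \<Rightarrow> 'w \<Rightarrow> nat"
    and X :: "nat \<Rightarrow> 'w \<Rightarrow> 'i"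
    and i j :: 'i
  assumes pi_support: "\<And>l. pmf (\<pi> l) 0 = 0"
    and F_pos: "\<And>l k. Fsurv \<pi> l k > 0"
    and p_nonneg: "\<And>l m. m \<noteq> l \<Longrightarrow> p m l \<ge> 0"
    and p_sum: "\<And>l. (\<Sum>m\<in>UNIV - {l}. p m l) = 1"
    and d_pos: "\<And>l. d l > 0"
    and p0_nonneg: "\<And>l. p0 l \<ge> 0"
    and p0_sum: "(\<Sum>l\<in>UNIV. p0 l) = 1"
    and M: "prob_space M"
    and y_meas: "\<And>k. y k \<in> borel_measurable M"
    and y_indep: "prob_space.indep_vars M (\<lambda>_. borel) y UNIV"
    and y_normal: "\<And>k. distributed M lborel (y k) std_normal_density"
    and h_meas: "\<And>k. h k \<in> measurable (Yalg M y k) (count_space UNIV)"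
    and h_pos: "\<And>k w. w \<in> space M \<Longrightarrow> h k w \<ge> 1"
    and X_meas: "\<And>k. X k \<in> measurable M (count_space UNIV)"
    and X_init: "\<And>l. AE w in M. real_cond_exp M (Yinf M y) (\<lambda>w. of_bool (X 0 w = l)) w = p0 l"
    and X_trans: "\<And>k l m. AE w in M. X k w = l \<longrightarrow>
        real_cond_exp M (XYalg M X y k) (\<lambda>w. of_bool (X (Suc k) w = m)) w = Amat \<pi> p (h k w) m l"
    and ij: "i \<noteq> j"
  shows "(AE w in M. \<forall>m. sigmaNX M c d X y i j 0 m w = 0)
    \<and> (\<forall>k. AE w in M. \<forall>m.
         sigmaNX M c d X y i j (Suc k) m w =
           gam c d m (y (Suc k) w) * (\<Sum>l\<in>UNIV. Amat \<pi> p (h k w) m l * sigmaNX M c d X y i j k l w)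
           + of_bool (m = j) * Amat \<pi> p (h k w) j i * qfilt M c d X y k i w * gam c d j (y (Suc k) w))"
proof -
  interpret hm M \<pi> p c d p0 y h X
    using pi_support F_pos d_pos y_meas y_indep y_normal h_meas X_meas X_init X_trans
    by (intro hm.intro hm_axioms.intro M) auto
  have z: "AE w in M. sigmaNX M c d X y i j 0 m w = 0" for m
  proof -
    have "(\<lambda>w. Lam c d X y 0 w * Njump X i j 0 w * of_bool (X 0 w = m)) = (\<lambda>w. 0)"
      by (simp add: Njump_def)
    then show ?thesis
      using sigma_finite_subalgebra.real_cond_exp_F_meas[OF sf_Y, of "\<lambda>w. 0" 0]
      by (simp add: sigmaNX_def)
  qed
  show ?thesis
  proof
    have "AE w in M. \<forall>m\<in>UNIV. sigmaNX M c d X y i j 0 m w = 0"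
      unfolding AE_finite_all[OF finite_class.finite_UNIV] using z by auto
    then show "AE w in M. \<forall>m. sigmaNX M c d X y i j 0 m w = 0" by simp
    show "\<forall>k. AE w in M. \<forall>m.
         sigmaNX M c d X y i j (Suc k) m w =
           gam c d m (y (Suc k) w) * (\<Sum>l\<in>UNIV. Amat \<pi> p (h k w) m l * sigmaNX M c d X y i j k l w)
           + of_bool (m = j) * Amat \<pi> p (h k w) j i * qfilt M c d X y k i w * gam c d j (y (Suc k) w)"
    proof
      fix k
      have "AE w in M. \<forall>m\<in>UNIV.
         sigmaNX M c d X y i j (Suc k) m w =
           gam c d m (y (Suc k) w) * (\<Sum>l\<in>UNIV. Amat \<pi> p (h k w) m l * sigmaNX M c d X y i j k l w)
           + of_bool (m = j) * Amat \<pi> p (h k w) j i * qfilt M c d X y k i w * gam c d j (y (Suc k) w)"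
        unfolding AE_finite_all[OF finite_class.finite_UNIV] using main_step[where k=k] by blast
      then show "AE w in M. \<forall>m.
         sigmaNX M c d X y i j (Suc k) m w =
           gam c d m (y (Suc k) w) * (\<Sum>l\<in>UNIV. Amat \<pi> p (h k w) m l * sigmaNX M c d X y i j k l w)
           + of_bool (m = j) * Amat \<pi> p (h k w) j i * qfilt M c d X y k i w * gam c d j (y (Suc k) w)"
        by simp
    qed
  qed
qed

end
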